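(* Let $G=(V,E)$ be a simple undirected graph, let $E^2=\{\{u,v\}\in\binom{V}{2}:\operatorname{dist}_G(u,v)\le 2\}$, and let $b\ge 0$. Let $F_1$ be the set of $(x,y)\in\mathbb{Z}_+^{E^2}\times\{0,1\}^V$ satisfying (i) $1-y_u-y_v-y_i\le x_{uv}$ for all $\{u,v\}\in E^2\setminus E$ and all $i\in N_G(u)\cap N_G(v)$, (ii) $1-y_u-y_v\le x_{uv}$ for all $\{u,v\}\in E$, and (iii) $\sum_{v\in V}y_v\le b$; and let $F_2$ be the set of $(x,y)\in\mathbb{Z}_+^{E^2}\times\{0,1\}^V$ satisfying (ii), (iii) and (i') $\dfrac{\sum_{i\in N_G(u)\cap N_G(v)}(1-y_i)}{|N_G(u)\cap N_G(v)|}-y_u-y_v\le x_{uv}$ for all $\{u,v\}\in E^2\setminus E$. Then $F_1=F_2$; that is, in the 2-DCNDP formulation the constraints (i) can be replaced by the constraints (i').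
   Context: The 2-DCNDP (2-hop distance-based critical node detection problem) MIP minimizes $\sum_{e\in E^2}x_e$ subject to (i)–(iii), where $y_v=1$ means vertex $v$ is deleted and $x_{uv}=1$ indicates that $u,v$ remain connected by a path of length at most $2$. $N_G(v)$ is the neighbor set of $v$; for $\{u,v\}\in E^2\setminus E$, $N_G(u)\cap N_G(v)\neq\emptyset$. *)

theory Defs
  imports Complex_Main "HOL-Library.FuncSet"
begin

definition simple_graph :: "'a set \<Rightarrow> 'a set set \<Rightarrow> bool" where
  "simple_graph V E \<longleftrightarrow> finite V \<and> (\<forall>e\<in>E. \<exists>u v. e = {u, v} \<and> u \<noteq> v \<and> u \<in> V \<and> v \<in> V)"

definition nbhd :: "'a set \<Rightarrow> 'a set set \<Rightarrow> 'a \<Rightarrow> 'a set" where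
  "nbhd V E v = {u \<in> V. {u, v} \<in> E}"

definition E2 :: "'a set \<Rightarrow> 'a set set \<Rightarrow> 'a set set" where
  "E2 V E = {{u, v} | u v. u \<in> V \<and> v \<in> V \<and> u \<noteq> v \<and>
      ({u, v} \<in> E \<or> nbhd V E u \<inter> nbhd V E v \<noteq> {})}"

definition dom_ok :: "'a set \<Rightarrow> 'a set set \<Rightarrow> ('a set \<Rightarrow> int) \<Rightarrow> ('a \<Rightarrow> int) \<Rightarrow> bool" where
  "dom_ok V E x y \<longleftrightarrow> (\<forall>e\<in>E2 V E. x e \<ge> 0) \<and> (\<forall>v\<in>V. y v \<in> {0, 1})"

definition con_ii :: "'a set \<Rightarrow> 'a set set \<Rightarrow> ('a set \<Rightarrow> int) \<Rightarrow> ('a \<Rightarrow> int) \<Rightarrow> bool" where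
  "con_ii V E x y \<longleftrightarrow> (\<forall>u v. {u, v} \<in> E \<longrightarrow> 1 - y u - y v \<le> x {u, v})"

definition con_iii :: "'a set \<Rightarrow> ('a \<Rightarrow> int) \<Rightarrow> real \<Rightarrow> bool" where
  "con_iii V y b \<longleftrightarrow> real_of_int (\<Sum>v\<in>V. y v) \<le> b"

definition con_i :: "'a set \<Rightarrow> 'a set set \<Rightarrow> ('a set \<Rightarrow> int) \<Rightarrow> ('a \<Rightarrow> int) \<Rightarrow> bool" where
  "con_i V E x y \<longleftrightarrow> (\<forall>u v. {u, v} \<in> E2 V E - E \<longrightarrow>
      (\<forall>i \<in> nbhd V E u \<inter> nbhd V E v. 1 - y u - y v - y i \<le> x {u, v}))"

definition con_i' :: "'a set \<Rightarrow> 'a set set \<Rightarrow> ('a set \<Rightarrow> int) \<Rightarrow> ('a \<Rightarrow> int) \<Rightarrow> bool" where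
  "con_i' V E x y \<longleftrightarrow> (\<forall>u v. {u, v} \<in> E2 V E - E \<longrightarrow>
      (\<Sum>i \<in> nbhd V E u \<inter> nbhd V E v. real_of_int (1 - y i))
        / real (card (nbhd V E u \<inter> nbhd V E v)) - real_of_int (y u) - real_of_int (y v)
      \<le> real_of_int (x {u, v}))"

definition F1 :: "'a set \<Rightarrow> 'a set set \<Rightarrow> real \<Rightarrow> (('a set \<Rightarrow> int) \<times> ('a \<Rightarrow> int)) set" where
  "F1 V E b = {(x, y). x \<in> extensional (E2 V E) \<and> y \<in> extensional V \<and>
      dom_ok V E x y \<and> con_i V E x y \<and> con_ii V E x y \<and> con_iii V y b}"

definition F2 :: "'a set \<Rightarrow> 'a set set \<Rightarrow> real \<Rightarrow> (('a set \<Rightarrow> int) \<times> ('a \<Rightarrow> int)) set" where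
  "F2 V E b = {(x, y). x \<in> extensional (E2 V E) \<and> y \<in> extensional V \<and>
      dom_ok V E x y \<and> con_i' V E x y \<and> con_ii V E x y \<and> con_iii V y b}"

end

theory Submission
  imports Defs
begin

lemma key:
  fixes N :: "'a set" and y :: "'a \<Rightarrow> int" and x yu yv :: int
  assumes fin: "finite N" and ne: "N \<noteq> {}" and yN: "\<forall>i\<in>N. y i \<in> {0,1}"
    and yu: "yu \<in> {0,1}" and yv: "yv \<in> {0,1}" and x: "x \<ge> 0"
  shows "(\<forall>i\<in>N. 1 - yu - yv - y i \<le> x) \<longleftrightarrow>
    ((\<Sum>i\<in>N. real_of_int (1 - y i)) / real (card N) - real_of_int yu - real_of_int yv \<le> real_of_int x)"
proof -
  define S where "S = (\<Sum>i\<in>N. real_of_int (1 - y i))"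
  have cpos: "real (card N) > 0" using fin ne by (simp add: card_gt_0_iff)
  have S0: "S \<ge> 0" unfolding S_def using yN by (intro sum_nonneg) auto
  have S1: "S \<le> real (card N)"
  proof -
    have "S \<le> (\<Sum>i\<in>N. 1)" unfolding S_def using yN by (intro sum_mono) auto
    then show ?thesis by simp
  qed
  have a0: "S / real (card N) \<ge> 0" using S0 cpos by simp
  have a1: "S / real (card N) \<le> 1" using S1 cpos by simp
  have Spos: "S > 0 \<longleftrightarrow> (\<exists>i\<in>N. y i = 0)"
  proof
    assume "S > 0"
    show "\<exists>i\<in>N. y i = 0"
    proof (rule ccontr)
      assume "\<not> ?thesis"
      then have "\<forall>i\<in>N. y i = 1" using yN by auto
      then have "S = 0" unfolding S_def by simp
      with \<open>S > 0\<close> show False by simp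
    qed
  next
    assume "\<exists>i\<in>N. y i = 0"
    then obtain j where j: "j \<in> N" "y j = 0" by auto
    have "S = real_of_int (1 - y j) + (\<Sum>i\<in>N-{j}. real_of_int (1 - y i))"
      unfolding S_def using fin j by (simp add: sum.remove)
    moreover have "(\<Sum>i\<in>N-{j}. real_of_int (1 - y i)) \<ge> 0" using yN by (intro sum_nonneg) auto
    ultimately show "S > 0" using j by simp
  qed
  have aS: "S / real (card N) > 0 \<longleftrightarrow> S > 0" using cpos S0 by (simp add: divide_pos_pos zero_less_divide_iff)
  show ?thesis
  proof (cases "yu = 1 \<or> yv = 1")
    case True
    then have "\<forall>i\<in>N. 1 - yu - yv - y i \<le> x" using yN yu yv x by auto
    moreover have "S / real (card N) - real_of_int yu - real_of_int yv \<le> real_of_int x"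
      using True a1 yu yv x by auto
    ultimately show ?thesis unfolding S_def by simp
  next
    case False
    then have z: "yu = 0" "yv = 0" using yu yv by auto
    show ?thesis
    proof (cases "x \<ge> 1")
      case True
      then have "\<forall>i\<in>N. 1 - yu - yv - y i \<le> x" using yN z by auto
      moreover have "S / real (card N) - real_of_int yu - real_of_int yv \<le> real_of_int x"
        using True a1 z by simp
      ultimately show ?thesis unfolding S_def by simp
    next
      case False
      then have x0: "x = 0" using x by simp
      have "(\<forall>i\<in>N. 1 - yu - yv - y i \<le> x) \<longleftrightarrow> \<not> (\<exists>i\<in>N. y i = 0)"
        using yN z x0 by force
      also have "\<dots> \<longleftrightarrow> \<not> (S / real (card N) > 0)" using Spos aS by simp
      also have "\<dots> \<longleftrightarrow> S / real (card N) - real_of_int yu - real_of_int yv \<le> real_of_int x"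
        using z x0 by auto
      finally show ?thesis unfolding S_def .
    qed
  qed
qed

lemma equiv_i:
  assumes g: "simple_graph V E" and d: "dom_ok V E x y"
  shows "con_i V E x y \<longleftrightarrow> con_i' V E x y"
proof -
  have "(\<forall>i \<in> nbhd V E u \<inter> nbhd V E v. 1 - y u - y v - y i \<le> x {u, v}) \<longleftrightarrow>
      (\<Sum>i \<in> nbhd V E u \<inter> nbhd V E v. real_of_int (1 - y i))
        / real (card (nbhd V E u \<inter> nbhd V E v)) - real_of_int (y u) - real_of_int (y v)
      \<le> real_of_int (x {u, v})" if uv: "{u, v} \<in> E2 V E - E" for u v
  proof -
    from uv obtain a c where ac: "{u,v} = {a,c}" "a \<in> V" "c \<in> V" "a \<noteq> c"
        "{a,c} \<in> E \<or> nbhd V E a \<inter> nbhd V E c \<noteq> {}"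
      unfolding E2_def by blast
    have "u \<in> V" "v \<in> V" "u \<noteq> v" using ac by (auto simp: doubleton_eq_iff)
    have "{u,v} \<notin> E" using uv by simp
    have ne: "nbhd V E u \<inter> nbhd V E v \<noteq> {}"
      using ac \<open>{u,v} \<notin> E\<close> by (auto simp: doubleton_eq_iff Int_commute insert_commute)
    have fV: "finite V" using g unfolding simple_graph_def by simp
    have fin: "finite (nbhd V E u \<inter> nbhd V E v)" using fV unfolding nbhd_def by simp
    have yN: "\<forall>i\<in>nbhd V E u \<inter> nbhd V E v. y i \<in> {0,1}" using d unfolding dom_ok_def nbhd_def by auto
    have "y u \<in> {0,1}" "y v \<in> {0,1}" using d \<open>u \<in> V\<close> \<open>v \<in> V\<close> unfolding dom_ok_def by auto
    moreover have "x {u,v} \<ge> 0" using d uv unfolding dom_ok_def by auto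
    ultimately show ?thesis using key[OF fin ne yN] by blast
  qed
  then show ?thesis unfolding con_i_def con_i'_def by blast
qed

theorem theorem1:
  fixes V :: "'a set" and E :: "'a set set" and b :: real
  assumes "simple_graph V E" and "b \<ge> 0"
  shows "F1 V E b = F2 V E b"
  unfolding F1_def F2_def using equiv_i[OF assms(1)] by blast

end
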